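(* Let $\ell\ge 3$ be an integer. There exist $M=M(\ell)\ge 1$ and $C=C(\ell)>0$ such that for every $m$ with $M\sqrt n\le m\le \frac{n}{16\lceil \ell/2\rceil}$ and every $n$-vertex graph $G$ with maximum degree $\Delta(G)<\frac{n}{32\lfloor \ell/2\rfloor}$ and minimum degree $\delta(G)\ge m$ the following holds: if $p\ge C\log n/n$, then asymptotically almost surely $G\cup G(n,p)$ contains at least $m$ pairwise vertex-disjoint copies of $C_\ell$.
   Context: $C_\ell$ is the cycle on $\ell$ vertices. $G(n,p)$ is the binomial random graph on $V(G)$ (each pair an edge independently with probability $p$), and $G\cup G(n,p)$ has as edge set the union of both edge sets. "Asymptotically almost surely" means with probability tending to $1$ as $n\to\infty$, for any sequences $m=m_n$, $G=G_n$ satisfying the hypotheses. *)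

theory Defs
  imports "HOL-Probability.Probability"
begin

definition all_pairs :: "nat \<Rightarrow> nat set set" where
  "all_pairs n = {e. \<exists>u v. e = {u, v} \<and> u \<noteq> v \<and> u < n \<and> v < n}"

definition is_graph_on :: "nat \<Rightarrow> nat set set \<Rightarrow> bool" where
  "is_graph_on n G \<longleftrightarrow> G \<subseteq> all_pairs n"

definition degree :: "nat set set \<Rightarrow> nat \<Rightarrow> nat" where
  "degree G u = card {v. {u, v} \<in> G}"

definition gnp :: "nat \<Rightarrow> real \<Rightarrow> nat set set pmf" where
  "gnp n p = map_pmf (\<lambda>f. {e \<in> all_pairs n. f e})
                     (Pi_pmf (all_pairs n) False (\<lambda>_. bernoulli_pmf p))"

definition is_cycle_in :: "nat set set \<Rightarrow> nat \<Rightarrow> nat list \<Rightarrow> bool" where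
  "is_cycle_in H l vs \<longleftrightarrow> length vs = l \<and> distinct vs \<and>
     (\<forall>i<l. {vs ! i, vs ! ((i + 1) mod l)} \<in> H)"

definition has_disjoint_cycles :: "nat set set \<Rightarrow> nat \<Rightarrow> nat \<Rightarrow> bool" where
  "has_disjoint_cycles H l k \<longleftrightarrow>
     (\<exists>cs :: nat \<Rightarrow> nat list. (\<forall>i<k. is_cycle_in H l (cs i)) \<and>
        (\<forall>i<k. \<forall>j<k. i \<noteq> j \<longrightarrow> set (cs i) \<inter> set (cs j) = {}))"

end

theory Submission
  imports Defs
begin


definition nb :: "nat set set \<Rightarrow> nat \<Rightarrow> nat set" where
  "nb G v = {u. {v, u} \<in> G}"

definition gpath :: "nat set set \<Rightarrow> nat list \<Rightarrow> bool" where
  "gpath G ys \<longleftrightarrow> (\<forall>i. Suc i < length ys \<longrightarrow> {ys ! i, ys ! Suc i} \<in> G)"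

definition ends :: "nat set set \<Rightarrow> nat \<Rightarrow> nat set \<Rightarrow> nat \<Rightarrow> nat set" where
  "ends G l W v = {z. \<exists>ys. length ys = l - 1 \<and> ys \<noteq> [] \<and> hd ys = v \<and> distinct ys \<and>
      set ys \<subseteq> W \<and> gpath G ys \<and> z \<in> W \<and> z \<notin> set ys \<and> {last ys, z} \<in> G}"

definition clos :: "nat set set \<Rightarrow> nat \<Rightarrow> nat set \<Rightarrow> nat set set" where
  "clos G l W = {{v, z} | v z. v \<in> W \<and> z \<in> ends G l W v}"

lemma path_exists:
  assumes "finite W" "v \<in> W" "\<forall>u\<in>W. card (nb G u \<inter> W) \<ge> d"
  shows "k < d \<Longrightarrow> \<exists>ys. length ys = Suc k \<and> hd ys = v \<and> distinct ys \<and> set ys \<subseteq> W \<and> gpath G ys"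
proof (induction k)
  case 0
  then show ?case using assms by (intro exI[of _ "[v]"]) (auto simp: gpath_def)
next
  case (Suc k)
  then obtain ys where ys: "length ys = Suc k" "hd ys = v" "distinct ys" "set ys \<subseteq> W" "gpath G ys"
    by auto
  define x where "x = last ys"
  have "ys \<noteq> []" using ys by auto
  then have xW: "x \<in> W" using ys x_def by auto
  have "card (set ys) = Suc k" using ys distinct_card by metis
  moreover have "card (nb G x \<inter> W) \<ge> d" using assms xW by auto
  ultimately have "\<not> (nb G x \<inter> W \<subseteq> set ys)" using Suc.prems
    by (metis List.finite_set card_mono leD le_trans)
  then obtain z where z: "z \<in> nb G x" "z \<in> W" "z \<notin> set ys" by auto
  have "gpath G (ys @ [z])"
    unfolding gpath_def
  proof (intro allI impI)
    fix i assume i: "Suc i < length (ys @ [z])"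
    show "{(ys @ [z]) ! i, (ys @ [z]) ! Suc i} \<in> G"
    proof (cases "Suc i < length ys")
      case True
      then show ?thesis using ys(5) by (auto simp: gpath_def nth_append)
    next
      case False
      then have "i = length ys - 1" using i by auto
      then show ?thesis using z(1) \<open>ys \<noteq> []\<close> x_def
        by (auto simp: nth_append nb_def last_conv_nth)
    qed
  qed
  then show ?case using ys z \<open>ys \<noteq> []\<close>
    by (intro exI[of _ "ys @ [z]"]) auto
qed

lemma ends_bound:
  assumes "finite W" "v \<in> W" "\<forall>u\<in>W. card (nb G u \<inter> W) \<ge> d" "l \<ge> 2"
  shows "d \<le> card (ends G l W v) + l"
proof (cases "d \<le> l")
  case True then show ?thesis by auto
next
  case False
  then have "l - 2 < d" by auto
  then obtain ys where ys: "length ys = Suc (l - 2)" "hd ys = v" "distinct ys" "set ys \<subseteq> W" "gpath G ys"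
    using path_exists[OF assms(1-3), of "l - 2"] by auto
  have len: "length ys = l - 1" using ys assms(4) by auto
  have ne: "ys \<noteq> []" using ys by auto
  define x where "x = last ys"
  have xW: "x \<in> W" using ys ne x_def by auto
  have sub: "nb G x \<inter> W - set ys \<subseteq> ends G l W v"
    unfolding ends_def x_def using ys len ne by (auto simp: nb_def)
  have fin: "finite (ends G l W v)" using assms(1) by (rule finite_subset[rotated]) (auto simp: ends_def)
  have "card (nb G x \<inter> W) - card (set ys) \<le> card (nb G x \<inter> W - set ys)"
    by (rule diff_card_le_card_Diff) simp
  also have "\<dots> \<le> card (ends G l W v)" using card_mono[OF fin sub] .
  finally have "card (nb G x \<inter> W) - (l - 1) \<le> card (ends G l W v)"
    using ys(3) len by (simp add: distinct_card)
  moreover have "card (nb G x \<inter> W) \<ge> d" using assms xW by auto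
  ultimately show ?thesis by linarith
qed

lemma nb_sym: "u \<in> nb G v \<longleftrightarrow> v \<in> nb G u"
  by (auto simp: nb_def insert_commute)

lemma nb_set: "{v. x \<in> nb G v} = nb G x"
  by (auto simp: nb_sym)

lemma degsum_split:
  assumes "finite W" "v \<in> W" "{v} \<notin> G"
  shows "(\<Sum>u\<in>W. card (nb G u \<inter> W)) =
         2 * card (nb G v \<inter> W) + (\<Sum>u\<in>W - {v}. card (nb G u \<inter> (W - {v})))"
proof -
  have vn: "v \<notin> nb G v" using assms(3) by (simp add: nb_def)
  have eq: "card (nb G u \<inter> W) = card (nb G u \<inter> (W - {v})) + (if u \<in> nb G v then 1 else 0)"
    if "u \<in> W - {v}" for u
  proof (cases "u \<in> nb G v")
    case True
    then have "nb G u \<inter> W = insert v (nb G u \<inter> (W - {v}))" using assms(2) nb_sym by blast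
    then show ?thesis using True assms(1) by simp
  next
    case False
    then have "nb G u \<inter> W = nb G u \<inter> (W - {v})" using nb_sym by blast
    then show ?thesis using False by simp
  qed
  have "(\<Sum>u\<in>W. card (nb G u \<inter> W)) = card (nb G v \<inter> W) + (\<Sum>u\<in>W - {v}. card (nb G u \<inter> W))"
    using assms(1,2) by (simp add: sum.remove)
  also have "(\<Sum>u\<in>W - {v}. card (nb G u \<inter> W)) =
     (\<Sum>u\<in>W - {v}. card (nb G u \<inter> (W - {v}))) + (\<Sum>u\<in>W - {v}. (if u \<in> nb G v then 1 else 0))"
    using eq by (simp add: sum.distrib)
  also have "(\<Sum>u\<in>W - {v}. (if u \<in> nb G v then 1 else 0)) = card ((W - {v}) \<inter> nb G v)"
    using assms(1) by (simp add: sum.If_cases)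
  also have "(W - {v}) \<inter> nb G v = nb G v \<inter> W" using vn by blast
  finally show ?thesis by simp
qed

lemma ends_mono:
  assumes "W' \<subseteq> W" shows "ends G l W' v \<subseteq> ends G l W v"
  using assms unfolding ends_def by blast

lemma peel:
  assumes "finite W" "\<forall>v. {v} \<notin> G" "l \<ge> 2"
  shows "(\<Sum>u\<in>W. card (nb G u \<inter> W)) \<le> 2 * (\<Sum>u\<in>W. card (ends G l W u) + l)"
  using assms(1)
proof (induction "card W" arbitrary: W rule: less_induct)
  case less
  show ?case
  proof (cases "W = {}")
    case True then show ?thesis by simp
  next
    case False
    obtain v where v: "v \<in> W" "\<forall>u\<in>W. card (nb G v \<inter> W) \<le> card (nb G u \<inter> W)"
      using ex_min_if_finite[of "(\<lambda>u. card (nb G u \<inter> W)) ` W"] less.prems False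
      by (auto simp: not_less)
    have fe: "finite (ends G l W u)" for u
      using less.prems by (rule finite_subset[rotated]) (auto simp: ends_def)
    have IH: "(\<Sum>u\<in>W - {v}. card (nb G u \<inter> (W - {v}))) \<le> 2 * (\<Sum>u\<in>W - {v}. card (ends G l (W - {v}) u) + l)"
      using less.hyps[of "W - {v}"] less.prems card_Diff1_less[OF less.prems v(1)] by simp
    also have "\<dots> \<le> 2 * (\<Sum>u\<in>W - {v}. card (ends G l W u) + l)"
      using ends_mono[of "W - {v}" W] fe by (intro mult_left_mono sum_mono add_right_mono card_mono) auto
    finally have 1: "(\<Sum>u\<in>W - {v}. card (nb G u \<inter> (W - {v}))) \<le> 2 * (\<Sum>u\<in>W - {v}. card (ends G l W u) + l)" .
    have 2: "card (nb G v \<inter> W) \<le> card (ends G l W v) + l"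
      by (rule ends_bound[OF less.prems v(1)]) (use v(2) assms(3) in auto)
    have "(\<Sum>u\<in>W. card (nb G u \<inter> W)) =
         2 * card (nb G v \<inter> W) + (\<Sum>u\<in>W - {v}. card (nb G u \<inter> (W - {v})))"
      by (rule degsum_split[OF less.prems v(1)]) (use assms(2) in auto)
    also have "\<dots> \<le> 2 * (card (ends G l W v) + l) + 2 * (\<Sum>u\<in>W - {v}. card (ends G l W u) + l)"
      using add_mono[OF mult_left_mono[OF 2, of 2] 1] by simp
    also have "\<dots> = 2 * (\<Sum>u\<in>W. card (ends G l W u) + l)"
      using less.prems v(1) by (simp add: sum.remove)
    finally show ?thesis .
  qed
qed

lemma ends_ne: assumes "z \<in> ends G l W v" shows "z \<noteq> v \<and> z \<in> W"
proof -
  obtain ys where "ys \<noteq> []" "hd ys = v" "z \<notin> set ys" "z \<in> W"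
    using assms unfolding ends_def by blast
  then show ?thesis using hd_in_set by blast
qed

lemma ends_sub: "ends G l W v \<subseteq> W"
  unfolding ends_def by blast

lemma sum_ends_le_clos:
  assumes "finite W"
  shows "(\<Sum>v\<in>W. card (ends G l W v)) \<le> 2 * card (clos G l W)"
proof -
  define S where "S = (SIGMA v:W. ends G l W v)"
  have fe: "finite (ends G l W v)" for v
    by (rule finite_subset[OF ends_sub assms])
  have "(\<Sum>v\<in>W. card (ends G l W v)) = card S"
    unfolding S_def using assms fe by (simp add: card_SigmaI)
  have finS: "finite S" unfolding S_def using assms fe by (rule finite_SigmaI)
  have cl: "clos G l W = (\<lambda>(v, z). {v, z}) ` S"
    unfolding clos_def S_def by (auto simp: image_iff)
  define g where "g = (\<lambda>(e::nat set, b::bool). if b then (Min e, Max e) else (Max e, Min e))"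
  have "S \<subseteq> g ` (clos G l W \<times> UNIV)"
  proof
    fix x assume x: "x \<in> S"
    obtain v z where vz: "x = (v, z)" "v \<in> W" "z \<in> ends G l W v" using x unfolding S_def by blast
    have ne: "v \<noteq> z" using ends_ne[OF vz(3)] by auto
    have ec: "{v, z} \<in> clos G l W" unfolding clos_def using vz by auto
    show "x \<in> g ` (clos G l W \<times> UNIV)"
    proof (cases "v < z")
      case True
      then have "g ({v, z}, True) = x" unfolding g_def using vz(1) by (simp add: min_def max_def)
      then show ?thesis using ec by (metis UNIV_I image_eqI mem_Times_iff fst_conv snd_conv)
    next
      case False
      then have "g ({v, z}, False) = x" unfolding g_def using vz(1) ne by (simp add: min_def max_def)
      then show ?thesis using ec by (metis UNIV_I image_eqI mem_Times_iff fst_conv snd_conv)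
    qed
  qed
  have fc: "finite (clos G l W)" using cl finS by simp
  have "card S \<le> card (g ` (clos G l W \<times> (UNIV::bool set)))"
    by (rule card_mono) (use fc \<open>S \<subseteq> _\<close> in simp_all)
  also have "\<dots> \<le> card (clos G l W \<times> (UNIV::bool set))" by (rule card_image_le) (use fc in simp)
  also have "\<dots> = 2 * card (clos G l W)" by (simp add: card_cartesian_product)
  finally show ?thesis using \<open>(\<Sum>v\<in>W. card (ends G l W v)) = card S\<close> by simp
qed

lemma cycle_from_clos:
  assumes "e \<in> R" "e \<in> clos G l W" "l \<ge> 2"
  shows "\<exists>c. is_cycle_in (G \<union> R) l c \<and> set c \<subseteq> W"
proof -
  obtain v z where e: "e = {v, z}" "v \<in> W" "z \<in> ends G l W v" using assms(2) clos_def by auto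
  then obtain ys where ys: "length ys = l - 1" "ys \<noteq> []" "hd ys = v" "distinct ys"
      "set ys \<subseteq> W" "gpath G ys" "z \<in> W" "z \<notin> set ys" "{last ys, z} \<in> G"
    unfolding ends_def by blast
  define c where "c = ys @ [z]"
  have lc: "length c = l" using ys assms(3) c_def by auto
  have "is_cycle_in (G \<union> R) l c"
    unfolding is_cycle_in_def
  proof (intro conjI allI impI)
    show "length c = l" by (fact lc)
    show "distinct c" using ys c_def by auto
    fix i assume i: "i < l"
    show "{c ! i, c ! ((i + 1) mod l)} \<in> G \<union> R"
    proof (cases "i + 1 < l")
      case True
      then have md: "(i + 1) mod l = Suc i" by simp
      show ?thesis
      proof (cases "Suc i < length ys")
        case True
        then show ?thesis using ys(6) md by (auto simp: gpath_def c_def nth_append)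
      next
        case False
        then have "i = length ys - 1" "Suc i = length ys" using \<open>i + 1 < l\<close> ys(1) by auto
        then show ?thesis using md ys(2,9) by (auto simp: c_def nth_append last_conv_nth)
      qed
    next
      case False
      then have "i = l - 1" using i by auto
      then have "c ! i = z" "c ! ((i + 1) mod l) = v" using ys(1,2,3) assms(3) lc
        by (auto simp: c_def nth_append hd_conv_nth)
      then show ?thesis using assms(1) e(1) by (auto simp: insert_commute)
    qed
  qed
  moreover have "set c \<subseteq> W" using ys c_def by auto
  ultimately show ?thesis by blast
qed

lemma greedy:
  assumes "l \<ge> 2"
    and hyp: "\<forall>U. U \<subseteq> {..<n} \<and> card U \<le> l * m \<longrightarrow> R \<inter> clos G l ({..<n} - U) \<noteq> {}"
  shows "has_disjoint_cycles (G \<union> R) l m"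
proof -
  have "k \<le> m \<Longrightarrow> \<exists>cs. (\<forall>i<k. is_cycle_in (G \<union> R) l (cs i) \<and> set (cs i) \<subseteq> {..<n}) \<and>
        (\<forall>i<k. \<forall>j<k. i \<noteq> j \<longrightarrow> set (cs i) \<inter> set (cs j) = {})" for k
  proof (induction k)
    case 0 then show ?case by auto
  next
    case (Suc k)
    then obtain cs where cs: "\<forall>i<k. is_cycle_in (G \<union> R) l (cs i) \<and> set (cs i) \<subseteq> {..<n}"
      "\<forall>i<k. \<forall>j<k. i \<noteq> j \<longrightarrow> set (cs i) \<inter> set (cs j) = {}" by auto
    define U where "U = (\<Union>i<k. set (cs i))"
    have "card U \<le> (\<Sum>i<k. card (set (cs i)))" unfolding U_def by (rule card_UN_le) simp
    also have "\<dots> \<le> (\<Sum>i<k. l)"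
      by (intro sum_mono) (use cs(1) in \<open>auto simp: is_cycle_in_def intro: card_length[THEN order_trans]\<close>)
    also have "\<dots> \<le> l * m" using Suc.prems by simp
    finally have cU: "card U \<le> l * m" .
    have sU: "U \<subseteq> {..<n}" using cs(1) U_def by auto
    obtain e where "e \<in> R" "e \<in> clos G l ({..<n} - U)" using hyp sU cU by blast
    then obtain c where c: "is_cycle_in (G \<union> R) l c" "set c \<subseteq> {..<n} - U"
      using cycle_from_clos assms(1) by blast
    show ?case
    proof (intro exI[of _ "cs(k := c)"] conjI)
      show "\<forall>i<Suc k. is_cycle_in (G \<union> R) l ((cs(k := c)) i) \<and> set ((cs(k := c)) i) \<subseteq> {..<n}"
      proof (intro allI impI)
        fix i assume "i < Suc k"
        then show "is_cycle_in (G \<union> R) l ((cs(k := c)) i) \<and> set ((cs(k := c)) i) \<subseteq> {..<n}"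
          using cs(1) c by (cases "i = k") auto
      qed
      show "\<forall>i<Suc k. \<forall>j<Suc k. i \<noteq> j \<longrightarrow> set ((cs(k := c)) i) \<inter> set ((cs(k := c)) j) = {}"
      proof (intro allI impI)
        fix i j assume "i < Suc k" "j < Suc k" "i \<noteq> j"
        then show "set ((cs(k := c)) i) \<inter> set ((cs(k := c)) j) = {}"
          using cs(2) c(2) U_def by (cases "i = k"; cases "j = k") auto
      qed
    qed
  qed
  from this[of m] show ?thesis unfolding has_disjoint_cycles_def by blast
qed


lemma graph_facts:
  assumes "is_graph_on n G"
  shows "nb G u \<subseteq> {..<n}" "\<forall>v. {v} \<notin> G"
proof -
  show "nb G u \<subseteq> {..<n}"
  proof
    fix v assume "v \<in> nb G u"
    then have "{u, v} \<in> all_pairs n" using assms by (auto simp: nb_def is_graph_on_def)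
    then obtain a b where "{u, v} = {a, b}" "a < n" "b < n" by (auto simp: all_pairs_def)
    then show "v \<in> {..<n}" by (auto simp: doubleton_eq_iff)
  qed
  show "\<forall>v. {v} \<notin> G"
  proof (intro allI notI)
    fix v assume "{v} \<in> G"
    then have "{v} \<in> all_pairs n" using assms by (auto simp: is_graph_on_def)
    then obtain a b where "{v} = {a, b}" "a \<noteq> b" by (auto simp: all_pairs_def)
    then show False by (metis insert_absorb insert_iff insert_not_empty singleton_insert_inj_eq)
  qed
qed

lemma clos_large:
  assumes gr: "is_graph_on n G" and l3: "l \<ge> 3"
    and dmax: "\<forall>u<n. real (degree G u) < real n / (32 * real (l div 2))"
    and dmin: "\<forall>u<n. degree G u \<ge> m"
    and mup: "real m \<le> real n / (16 * real ((l + 1) div 2))"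
    and mlow: "64 * l \<le> 9 * m"
    and U: "U \<subseteq> {..<n}" "card U \<le> l * m"
  shows "real n * real m \<le> 8 * real (card (clos G l ({..<n} - U)))"
proof -
  define W where "W = {..<n} - U"
  define a where "a = real (l div 2)"
  define b where "b = real ((l + 1) div 2)"
  have a1: "a \<ge> 1" and la: "real l \<le> 3 * a" unfolding a_def using l3 by linarith+
  have b1: "b \<ge> 1" and lb: "real l \<le> 2 * b" unfolding b_def using l3 by linarith+
  have finW: "finite W" unfolding W_def by simp
  have finU: "finite U" using U(1) finite_subset by blast
  have deg: "degree G u = card (nb G u)" for u by (simp add: degree_def nb_def)
  have nbn: "nb G u \<subseteq> {..<n}" for u using graph_facts[OF gr] by blast
  have noloop: "\<forall>v. {v} \<notin> G" using graph_facts[OF gr] by blast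
  have finnb: "finite (nb G u)" for u using nbn finite_subset by blast
  have cW: "card W = n - card U" unfolding W_def using U(1) by (simp add: card_Diff_subset finU)
  have cWr: "real (card W) = real n - real (card U)"
    using cW U(1) card_mono[of "{..<n}" U] by simp
  define D where "D = (\<Sum>v\<in>W. card (nb G v \<inter> W))"
  define X where "X = (\<Sum>v\<in>W. card (nb G v \<inter> U))"
  have split: "card (nb G v) = card (nb G v \<inter> W) + card (nb G v \<inter> U)" for v
  proof -
    have "nb G v = (nb G v \<inter> W) \<union> (nb G v \<inter> U)" using nbn[of v] W_def by blast
    then show ?thesis using finnb[of v] by (metis card_Un_disjoint W_def Diff_disjoint finite_Int
          inf_commute inf_left_commute Int_empty_right Int_Diff_disjoint)
  qed
  have "card W * m \<le> (\<Sum>v\<in>W. card (nb G v))"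
    using dmin deg W_def by (intro sum_bounded_below[of W m, simplified]) auto
  also have "\<dots> = D + X" unfolding D_def X_def by (simp add: split sum.distrib)
  finally have DX: "card W * m \<le> D + X" .
  have "X = (\<Sum>v\<in>W. \<Sum>u\<in>U. if u \<in> nb G v then 1 else 0)"
    unfolding X_def using finU by (intro sum.cong refl) (simp add: sum.If_cases Int_commute)
  also have "\<dots> = (\<Sum>u\<in>U. \<Sum>v\<in>W. if u \<in> nb G v then 1 else 0)" by (rule sum.swap)
  also have "\<dots> = (\<Sum>u\<in>U. card (nb G u \<inter> W))"
    using finW by (intro sum.cong refl) (simp add: sum.If_cases Int_commute nb_set)
  also have "\<dots> \<le> (\<Sum>u\<in>U. card (nb G u))"
    using finnb by (intro sum_mono card_mono) auto
  finally have X1: "X \<le> (\<Sum>u\<in>U. card (nb G u))" .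
  have "real X \<le> (\<Sum>u\<in>U. real (card (nb G u)))" using X1 by (metis of_nat_le_iff of_nat_sum)
  also have "\<dots> \<le> (\<Sum>u\<in>U. real n / (32 * a))"
    using dmax U(1) deg a_def by (intro sum_mono) (auto intro: less_imp_le)
  also have "\<dots> = real (card U) * (real n / (32 * a))" by simp
  finally have Xr: "real X \<le> real (card U) * (real n / (32 * a))" .
  have "D \<le> 2 * (\<Sum>u\<in>W. card (ends G l W u) + l)"
    unfolding D_def by (rule peel[OF finW noloop]) (use l3 in simp)
  also have "\<dots> = 2 * (\<Sum>u\<in>W. card (ends G l W u)) + 2 * l * card W"
    by (simp add: sum.distrib)
  also have "\<dots> \<le> 4 * card (clos G l W) + 2 * l * n"
    using sum_ends_le_clos[OF finW, of G l] cW by (intro add_mono) auto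
  finally have Dr: "real D \<le> 4 * real (card (clos G l W)) + 2 * real l * real n"
    by (metis (mono_tags) of_nat_le_iff of_nat_add of_nat_mult of_nat_numeral)
  have DXr: "real (card W) * real m \<le> real D + real X" using DX by (metis of_nat_le_iff of_nat_add of_nat_mult)
  have cUr: "real (card U) \<le> real l * real m" using U(2) by (metis of_nat_le_iff of_nat_mult)
  have n0: "real n \<ge> 0" by simp
  have lm8: "real l * real m \<le> real n / 8"
  proof -
    have "real m \<le> real n / (16 * b)" using mup unfolding b_def .
    then have "16 * b * real m \<le> real n" using b1 by (simp add: field_simps)
    moreover have "real l * real m \<le> 2 * b * real m" using lb by (intro mult_right_mono) auto
    ultimately show ?thesis by linarith
  qed
  have t1: "real (card U) * (real n / (32 * a)) \<le> 3 * real n * real m / 32"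
  proof -
    have "real (card U) * (real n / (32 * a)) \<le> real l * real m * (real n / (32 * a))"
      using cUr n0 a1 by (intro mult_right_mono) auto
    also have "\<dots> \<le> 3 * a * real m * (real n / (32 * a))"
      using la n0 a1 by (intro mult_right_mono) auto
    also have "\<dots> = 3 * real n * real m / 32" using a1 by (simp add: field_simps)
    finally show ?thesis .
  qed
  have t2: "real (card W) * real m \<ge> 7 * real n * real m / 8"
  proof -
    have "real (card W) \<ge> 7 * real n / 8" using cWr cUr lm8 by linarith
    then have "7 * real n / 8 * real m \<le> real (card W) * real m" by (intro mult_right_mono) auto
    then show ?thesis by simp
  qed
  have t3: "2 * real l * real n \<le> 9 * real m * real n / 32"
  proof -
    have "64 * real l \<le> 9 * real m" using mlow by (metis of_nat_le_iff of_nat_mult of_nat_numeral)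
    then have "64 * real l * real n \<le> 9 * real m * real n" using n0 by (intro mult_right_mono) auto
    then show ?thesis by simp
  qed
  define P where "P = real n * real m"
  have t1': "real (card U) * (real n / (32 * a)) \<le> 3 * P / 32" using t1 unfolding P_def by (simp add: algebra_simps)
  have t2': "7 * P / 8 \<le> real (card W) * real m" using t2 unfolding P_def by (simp add: algebra_simps)
  have t3': "2 * real l * real n \<le> 9 * P / 32" using t3 unfolding P_def by (simp add: algebra_simps)
  have "P \<le> 8 * real (card (clos G l W))" using Dr DXr Xr t1' t2' t3' by linarith
  then show ?thesis unfolding P_def W_def .
qed



lemma finite_all_pairs: "finite (all_pairs n)"
proof -
  have "all_pairs n \<subseteq> Pow {..<n}" by (auto simp: all_pairs_def)
  then show ?thesis by (rule finite_subset) simp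
qed

lemma prob_miss:
  assumes "F \<subseteq> all_pairs n" "0 \<le> p" "p \<le> 1"
  shows "measure_pmf.prob (gnp n p) {R. R \<inter> F = {}} = (1 - p) ^ card F"
proof -
  define A where "A = all_pairs n"
  define B where "B = (\<lambda>e. if e \<in> F then {False} else (UNIV :: bool set))"
  have pre: "(\<lambda>f. {e \<in> A. f e}) -` {R. R \<inter> F = {}} = Pi A B"
    using assms(1) unfolding A_def B_def Pi_def by auto
  have "measure_pmf.prob (gnp n p) {R. R \<inter> F = {}} =
        measure_pmf.prob (Pi_pmf A False (\<lambda>_. bernoulli_pmf p)) ((\<lambda>f. {e \<in> A. f e}) -` {R. R \<inter> F = {}})"
    unfolding gnp_def A_def[symmetric] by (rule measure_map_pmf)
  also have "\<dots> = measure_pmf.prob (Pi_pmf A False (\<lambda>_. bernoulli_pmf p)) (Pi A B)"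
    by (simp only: pre)
  also have "\<dots> = (\<Prod>x\<in>A. measure_pmf.prob (bernoulli_pmf p) (B x))"
    by (rule measure_Pi_pmf_Pi) (simp add: A_def finite_all_pairs)
  also have "\<dots> = (\<Prod>x\<in>A. if x \<in> F then 1 - p else 1)"
    using assms(2,3) by (intro prod.cong refl) (simp add: B_def measure_pmf_single)
  also have "\<dots> = (1 - p) ^ card (A \<inter> F)"
    by (simp add: prod.If_cases finite_all_pairs A_def Int_def)
  also have "A \<inter> F = F" using assms(1) A_def by blast
  finally show ?thesis .
qed

lemma count_small_subsets:
  "card {U. U \<subseteq> {..<n} \<and> card U \<le> K} \<le> (K + 1) * n ^ K" if "n \<ge> 1"
proof -
  have eq: "{U. U \<subseteq> {..<n} \<and> card U \<le> K} = (\<Union>k\<in>{..K}. {U. U \<subseteq> {..<n} \<and> card U = k})"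
    by auto
  have "card {U. U \<subseteq> {..<n} \<and> card U \<le> K} \<le> (\<Sum>k\<in>{..K}. card {U. U \<subseteq> {..<n} \<and> card U = k})"
    unfolding eq by (rule card_UN_le) simp
  also have "\<dots> = (\<Sum>k\<in>{..K}. n choose k)" by (simp add: n_subsets)
  also have "\<dots> \<le> (\<Sum>k\<in>{..K}. n ^ K)"
  proof (intro sum_mono)
    fix k assume k: "k \<in> {..K}"
    have "n choose k \<le> n ^ k"
      by (cases "k \<le> n") (auto simp: binomial_le_pow binomial_eq_0)
    also have "\<dots> \<le> n ^ K" using k that by (intro power_increasing) auto
    finally show "n choose k \<le> n ^ K" .
  qed
  also have "\<dots> = (K + 1) * n ^ K" by simp
  finally show ?thesis .
qed

lemma one_minus_pow_le_exp:
  assumes "0 \<le> p" "p \<le> 1"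
  shows "(1 - p) ^ k \<le> exp (- p * real k)"
proof -
  have "1 - p \<le> exp (- p)" using exp_ge_add_one_self[of "-p"] by simp
  then have "(1 - p) ^ k \<le> exp (- p) ^ k" using assms by (intro power_mono) auto
  also have "\<dots> = exp (- p * real k)" by (metis exp_of_nat_mult mult.commute)
  finally show ?thesis .
qed

lemma final_arith:
  fixes n m l :: nat
  assumes "n \<ge> 2" "m \<ge> 1"
  shows "real (l * m + 1) * real n ^ (l * m) * exp (- (real (l + 2) * real m * ln (real n)))
         \<le> real (l + 1) / real n"
proof -
  have npos: "real n > 0" using assms by simp
  have e: "exp (real k * ln (real n)) = real n ^ k" for k
    using npos by (simp add: exp_of_nat_mult)
  have r: "real (l + 2) * real m * ln (real n) = real ((l + 2) * m) * ln (real n)" by (simp add: algebra_simps)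
  have "exp (- (real (l + 2) * real m * ln (real n))) = inverse (real n ^ ((l + 2) * m))"
    unfolding r exp_minus e ..
  also have "real n ^ ((l + 2) * m) = real n ^ (l * m) * real n ^ (2 * m)"
    by (metis add_mult_distrib power_add add.commute)
  finally have ex: "exp (- (real (l + 2) * real m * ln (real n))) = inverse (real n ^ (l * m) * real n ^ (2 * m))" .
  have key: "(l * m + 1) * n \<le> (l + 1) * n ^ (2 * m)"
  proof -
    have "m < 2 ^ m" by (rule less_exp)
    also have "(2::nat) ^ m \<le> n ^ m" using assms by (intro power_mono) auto
    finally have 1: "m \<le> n ^ m" by simp
    have 2: "n \<le> n ^ m" using assms by (metis One_nat_def le_less_trans less_one not_less power_increasing power_one_right zero_le_one)
    have "(l * m + 1) * n \<le> (l + 1) * m * n" using assms by (intro mult_right_mono) (auto simp: algebra_simps)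
    also have "\<dots> \<le> (l + 1) * (n ^ m * n ^ m)"
      using mult_mono[OF 1 2] by (metis mult.assoc mult_le_mono2 zero_le)
    also have "\<dots> = (l + 1) * n ^ (2 * m)" by (simp add: power_add[symmetric] mult_2)
    finally show ?thesis .
  qed
  have keyr: "real (l * m + 1) * real n \<le> real (l + 1) * real n ^ (2 * m)"
    using key by (metis of_nat_le_iff of_nat_mult of_nat_power)
  have pp: "real n ^ (l * m) > 0" "real n ^ (2 * m) > 0" using npos by auto
  have "real (l * m + 1) * real n ^ (l * m) * exp (- (real (l + 2) * real m * ln (real n)))
        = real (l * m + 1) / real n ^ (2 * m)"
    unfolding ex using pp by (simp add: field_simps)
  also have "\<dots> \<le> real (l + 1) / real n"
    using keyr pp npos by (simp add: divide_simps)
  finally show ?thesis .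
qed



lemma clos_pairs:
  assumes "W \<subseteq> {..<n}" shows "clos G l W \<subseteq> all_pairs n"
proof
  fix e assume "e \<in> clos G l W"
  then obtain v z where e: "e = {v, z}" "v \<in> W" "z \<in> ends G l W v" unfolding clos_def by blast
  have "z \<noteq> v" "z \<in> W" using ends_ne[OF e(3)] by auto
  then show "e \<in> all_pairs n" using e assms unfolding all_pairs_def by blast
qed

lemma per_n:
  assumes l3: "l \<ge> 3" and n2: "n \<ge> 2" and mlow: "64 * l \<le> 9 * m" and m1: "m \<ge> 1"
    and gr: "is_graph_on n G"
    and dmax: "\<forall>u<n. real (degree G u) < real n / (32 * real (l div 2))"
    and dmin: "\<forall>u<n. degree G u \<ge> m"
    and mup: "real m \<le> real n / (16 * real ((l + 1) div 2))"
    and plow: "real (8 * (l + 2)) * ln (real n) / real n \<le> p" and p1: "p \<le> 1"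
  shows "1 - real (l + 1) / real n \<le> measure_pmf.prob (gnp n p) {R. has_disjoint_cycles (G \<union> R) l m}"
proof -
  have npos: "real n > 0" using n2 by simp
  have lnn: "ln (real n) \<ge> 0" using n2 by simp
  have p0: "0 \<le> p" using plow lnn npos by (smt (verit) divide_nonneg_pos mult_nonneg_nonneg of_nat_0_le_iff)
  have pn: "real (8 * (l + 2)) * ln (real n) \<le> p * real n" using plow npos by (simp add: field_simps)
  define UU where "UU = {U. U \<subseteq> {..<n} \<and> card U \<le> l * m}"
  define Ev where "Ev = (\<lambda>U. {R. R \<inter> clos G l ({..<n} - U) = {}})"
  have finUU: "finite UU"
  proof -
    have "UU \<subseteq> Pow {..<n}" unfolding UU_def by auto
    then show ?thesis by (rule finite_subset) simp
  qed
  define Bad where "Bad = {R. \<not> has_disjoint_cycles (G \<union> R) l m}"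
  have BadS: "Bad \<subseteq> (\<Union>U\<in>UU. Ev U)"
  proof
    fix R assume "R \<in> Bad"
    then have "\<not> has_disjoint_cycles (G \<union> R) l m" unfolding Bad_def by simp
    then have "\<not> (\<forall>U. U \<subseteq> {..<n} \<and> card U \<le> l * m \<longrightarrow> R \<inter> clos G l ({..<n} - U) \<noteq> {})"
      using greedy[of l n m R G] l3 by auto
    then show "R \<in> (\<Union>U\<in>UU. Ev U)" unfolding UU_def Ev_def by auto
  qed
  define B where "B = exp (- (real (l + 2) * real m * ln (real n)))"
  have evb: "measure_pmf.prob (gnp n p) (Ev U) \<le> B" if "U \<in> UU" for U
  proof -
    have U: "U \<subseteq> {..<n}" "card U \<le> l * m" using that UU_def by auto
    define k where "k = card (clos G l ({..<n} - U))"
    have kb: "real n * real m \<le> 8 * real k"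
      unfolding k_def by (rule clos_large[OF gr l3 dmax dmin mup mlow U])
    have "measure_pmf.prob (gnp n p) (Ev U) = (1 - p) ^ k"
      unfolding Ev_def k_def by (rule prob_miss[OF clos_pairs p0 p1]) auto
    also have "\<dots> \<le> exp (- p * real k)" by (rule one_minus_pow_le_exp[OF p0 p1])
    also have "\<dots> \<le> B"
    proof -
      have "real (8 * (l + 2)) * ln (real n) * real m \<le> p * real n * real m"
        using pn by (intro mult_right_mono) auto
      also have "\<dots> \<le> p * (8 * real k)" using kb p0 by (simp add: mult.assoc mult_left_mono)
      finally have "real (l + 2) * real m * ln (real n) \<le> p * real k" by (simp add: algebra_simps)
      then show ?thesis unfolding B_def by simp
    qed
    finally show ?thesis .
  qed
  have "measure_pmf.prob (gnp n p) Bad \<le> measure_pmf.prob (gnp n p) (\<Union>U\<in>UU. Ev U)"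
    using BadS by (intro measure_pmf.finite_measure_mono) auto
  also have "\<dots> \<le> (\<Sum>U\<in>UU. measure_pmf.prob (gnp n p) (Ev U))"
    by (rule measure_pmf.finite_measure_subadditive_finite[OF finUU]) auto
  also have "\<dots> \<le> (\<Sum>U\<in>UU. B)" using evb by (rule sum_mono)
  also have "\<dots> = real (card UU) * B" by simp
  also have "\<dots> \<le> real ((l * m + 1) * n ^ (l * m)) * B"
  proof -
    have "card UU \<le> (l * m + 1) * n ^ (l * m)" unfolding UU_def
      by (rule count_small_subsets) (use n2 in auto)
    then have "real (card UU) \<le> real ((l * m + 1) * n ^ (l * m))" by (simp only: of_nat_le_iff)
    moreover have "B \<ge> 0" unfolding B_def by simp
    ultimately show ?thesis by (rule mult_right_mono)
  qed
  also have "\<dots> = real (l * m + 1) * real n ^ (l * m) * exp (- (real (l + 2) * real m * ln (real n)))"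
    unfolding B_def by (simp only: of_nat_mult of_nat_power)
  also have "\<dots> \<le> real (l + 1) / real n"
    by (rule final_arith[OF n2 m1])
  finally have bad: "measure_pmf.prob (gnp n p) Bad \<le> real (l + 1) / real n" .
  have "measure_pmf.prob (gnp n p) {R. has_disjoint_cycles (G \<union> R) l m}
        = measure_pmf.prob (gnp n p) (space (measure_pmf (gnp n p)) - Bad)"
    unfolding Bad_def by (intro arg_cong[where f="measure_pmf.prob (gnp n p)"]) auto
  also have "\<dots> = 1 - measure_pmf.prob (gnp n p) Bad"
    by (rule measure_pmf.prob_compl) auto
  finally show ?thesis using bad by linarith
qed



theorem proposition3p2:
  fixes l :: nat
  assumes "l \<ge> 3"
  shows "\<exists>M::real. M \<ge> 1 \<and> (\<exists>C::real. C > 0 \<and>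
    (\<forall>(m :: nat \<Rightarrow> nat) (G :: nat \<Rightarrow> nat set set) (p :: nat \<Rightarrow> real).
      (\<forall>\<^sub>F n in sequentially.
          M * sqrt (real n) \<le> real (m n) \<and>
          real (m n) \<le> real n / (16 * real ((l + 1) div 2)) \<and>
          is_graph_on n (G n) \<and>
          (\<forall>u<n. real (degree (G n) u) < real n / (32 * real (l div 2))) \<and>
          (\<forall>u<n. degree (G n) u \<ge> m n) \<and>
          C * ln (real n) / real n \<le> p n \<and> p n \<le> 1)
      \<longrightarrow> (\<lambda>n. measure_pmf.prob (gnp n (p n))
                 {R. has_disjoint_cycles (G n \<union> R) l (m n)}) \<longlonglongrightarrow> 1))"
proof (rule exI[of _ 1], rule conjI[OF order_refl], rule exI[of _ "real (8 * (l + 2))"], rule conjI)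
  show "real (8 * (l + 2)) > 0" by simp
  show "\<forall>(m :: nat \<Rightarrow> nat) (G :: nat \<Rightarrow> nat set set) (p :: nat \<Rightarrow> real).
      (\<forall>\<^sub>F n in sequentially.
          1 * sqrt (real n) \<le> real (m n) \<and>
          real (m n) \<le> real n / (16 * real ((l + 1) div 2)) \<and>
          is_graph_on n (G n) \<and>
          (\<forall>u<n. real (degree (G n) u) < real n / (32 * real (l div 2))) \<and>
          (\<forall>u<n. degree (G n) u \<ge> m n) \<and>
          real (8 * (l + 2)) * ln (real n) / real n \<le> p n \<and> p n \<le> 1)
      \<longrightarrow> (\<lambda>n. measure_pmf.prob (gnp n (p n))
                 {R. has_disjoint_cycles (G n \<union> R) l (m n)}) \<longlonglongrightarrow> 1"
  proof (intro allI impI)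
  fix m :: "nat \<Rightarrow> nat" and G :: "nat \<Rightarrow> nat set set" and p :: "nat \<Rightarrow> real"
  assume H: "\<forall>\<^sub>F n in sequentially.
          1 * sqrt (real n) \<le> real (m n) \<and>
          real (m n) \<le> real n / (16 * real ((l + 1) div 2)) \<and>
          is_graph_on n (G n) \<and>
          (\<forall>u<n. real (degree (G n) u) < real n / (32 * real (l div 2))) \<and>
          (\<forall>u<n. degree (G n) u \<ge> m n) \<and>
          real (8 * (l + 2)) * ln (real n) / real n \<le> p n \<and> p n \<le> 1"
  define P where "P = (\<lambda>n. measure_pmf.prob (gnp n (p n)) {R. has_disjoint_cycles (G n \<union> R) l (m n)})"
  have ev: "\<forall>\<^sub>F n in sequentially. 1 - real (l + 1) / real n \<le> P n"
    using H eventually_ge_at_top[of "max 2 ((64 * l)^2)"]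
  proof eventually_elim
    case (elim n)
    have n2: "n \<ge> 2" using elim by simp
    have "real (64 * l) \<le> sqrt (real n)"
    proof (rule real_le_rsqrt)
      have "(64 * l)^2 \<le> n" using elim by simp
      then show "(real (64 * l))\<^sup>2 \<le> real n" by (metis of_nat_le_iff of_nat_power)
    qed
    also have "\<dots> \<le> real (m n)" using elim by simp
    finally have "64 * l \<le> m n" by linarith
    then have mlow: "64 * l \<le> 9 * m n" by simp
    have m1: "m n \<ge> 1" using \<open>64 * l \<le> m n\<close> assms by simp
    show ?case unfolding P_def
      by (rule per_n[OF assms n2 mlow m1]) (use elim in auto)
  qed
  have "P n \<le> 1" for n unfolding P_def by simp
  then have ev2: "\<forall>\<^sub>F n in sequentially. P n \<le> 1" by simp
  have lim: "(\<lambda>n. 1 - real (l + 1) / real n) \<longlonglongrightarrow> 1"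
    using tendsto_diff[OF tendsto_const lim_const_over_n[of "real (l + 1)"]] by simp
  show "P \<longlonglongrightarrow> 1"
    by (rule tendsto_sandwich[OF ev ev2 lim tendsto_const])
  qed
qed

end
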